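(* Let $k\ge2$ be an integer and $n\in\mathbb Z$. Then $\det(L_k^{(n)})=\det(L_k^{(0)})$ if $k$ is odd, and $\det(L_k^{(n)})=(-1)^n\det(L_k^{(0)})$ if $k$ is even.
   Context: Fix an integer $k\ge2$. Let $Q_k$ be the $k\times k$ matrix whose first row is all ones, with $(Q_k)_{i+1,i}=1$ for $1\le i\le k-1$ and all other entries $0$, and for $r\in\mathbb Z$ let $Q_k^r$ denote its $r$-th power. The generalized Lucas sequence of order $k$, $(l_{k,n})_{n\in\mathbb Z}$, is the two-sided sequence satisfying $l_{k,n+k}=l_{k,n+k-1}+\dots+l_{k,n}$ for all $n\in\mathbb Z$ with initial values $l_{k,r}=\operatorname{trace}(Q_k^r)$ for $0\le r\le k-1$ (so $l_{k,0}=k$ and $l_{k,r}=2^r-1$ for $1\le r\le k-1$). For $n\in\mathbb Z$ the generalized Lucas matrix $L_k^{(n)}$ is the $k\times k$ matrix with entries $(L_k^{(n)})_{i,1}=l_{k,k+n-i}$ and $(L_k^{(n)})_{i,j}=\sum_{m=n-i+j-1}^{k+n-i-1} l_{k,m}$ for $2\le j\le k$, $1\le i\le k$. *)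

theory Defs
  imports "Jordan_Normal_Form.Determinant"
begin

definition Qmat :: "nat \<Rightarrow> int mat" where
  "Qmat k = mat k k (\<lambda>(i,j). if i = 0 then 1 else if i = j + 1 then 1 else 0)"

definition mat_trace :: "'a::comm_ring_1 mat \<Rightarrow> 'a" where
  "mat_trace A = (\<Sum>i<dim_row A. A $$ (i,i))"

definition lucas :: "nat \<Rightarrow> int \<Rightarrow> int" where
  "lucas k = (THE f. (\<forall>n::int. f (n + int k) = (\<Sum>j<k. f (n + int j)))
                   \<and> (\<forall>r<k. f (int r) = mat_trace (Qmat k ^\<^sub>m r)))"

text \<open>The generalized Lucas matrix L_k^(n); entry (i0,j0) (0-based) corresponds to
  (i,j) = (i0+1, j0+1) of the paper.\<close>
definition lucas_mat :: "nat \<Rightarrow> int \<Rightarrow> int mat" where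
  "lucas_mat k n = mat k k (\<lambda>(i0,j0).
     let i = int i0 + 1; j = int j0 + 1 in
     if j = 1 then lucas k (int k + n - i)
     else (\<Sum>m\<in>{n - i + j - 1 .. int k + n - i - 1}. lucas k m))"

end

theory Submission
  imports Defs
begin

function ext :: "nat \<Rightarrow> (nat \<Rightarrow> int) \<Rightarrow> int \<Rightarrow> int" where
  "ext k a n = (if k = 0 then 0 else if 0 \<le> n \<and> n < int k then a (nat n)
     else if n \<ge> int k then (\<Sum>j<k. ext k a (n - int k + int j))
     else ext k a (n + int k) - (\<Sum>j\<in>{1..<k}. ext k a (n + int j)))"
  by pat_completeness auto
termination
  by (relation "measure (\<lambda>(k,a,n). if n \<ge> 0 then nat n else k + nat (-n))") auto

declare ext.simps[simp del]

lemma ext_rec: "k > 0 \<Longrightarrow> ext k a (n + int k) = (\<Sum>j<k. ext k a (n + int j))"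
proof (cases "n \<ge> 0")
  case True
  assume k: "k > 0"
  show ?thesis using True k by (subst ext.simps) simp
next
  case False
  assume k: "k > 0"
  have "ext k a n = ext k a (n + int k) - (\<Sum>j\<in>{1..<k}. ext k a (n + int j))"
    using False k by (subst ext.simps) simp
  moreover have "(\<Sum>j<k. ext k a (n + int j)) = ext k a n + (\<Sum>j\<in>{1..<k}. ext k a (n + int j))"
    using k by (simp add: lessThan_atLeast0 sum.atLeast_Suc_lessThan)
  ultimately show ?thesis by simp
qed

lemma ext_init: "k > 0 \<Longrightarrow> r < k \<Longrightarrow> ext k a (int r) = a r"
  by (subst ext.simps) simp

lemma uniq:
  fixes f g :: "int \<Rightarrow> int"
  assumes k: "k > 0"
    and f: "\<forall>n::int. f (n + int k) = (\<Sum>j<k. f (n + int j))"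
    and g: "\<forall>n::int. g (n + int k) = (\<Sum>j<k. g (n + int j))"
    and i: "\<forall>r<k. f (int r) = g (int r)"
  shows "f n = g n"
proof (induction n rule: measure_induct_rule[where f="\<lambda>n. if n \<ge> 0 then nat n else k + nat (-n)"])
  case (less n)
  show ?case
  proof (cases "0 \<le> n \<and> n < int k")
    case True then show ?thesis using i by (metis nat_0_le nat_less_iff)
  next
    case False
    show ?thesis
    proof (cases "n \<ge> int k")
      case True
      have "f n = (\<Sum>j<k. f (n - int k + int j))" using f[rule_format, of "n - int k"] by simp
      also have "\<dots> = (\<Sum>j<k. g (n - int k + int j))"
        by (rule sum.cong[OF refl], rule less) (use True in auto)
      also have "\<dots> = g n" using g[rule_format, of "n - int k"] by simp
      finally show ?thesis .
    next
      case c: False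
      have e: "h n = h (n + int k) - (\<Sum>j\<in>{1..<k}. h (n + int j))"
        if h: "\<forall>n::int. h (n + int k) = (\<Sum>j<k. h (n + int j))" for h :: "int \<Rightarrow> int"
      proof -
        have "(\<Sum>j<k. h (n + int j)) = h n + (\<Sum>j\<in>{1..<k}. h (n + int j))"
          using k by (simp add: lessThan_atLeast0 sum.atLeast_Suc_lessThan)
        then show ?thesis using h[rule_format, of n] by simp
      qed
      have "f n = f (n + int k) - (\<Sum>j\<in>{1..<k}. f (n + int j))" by (rule e[OF f])
      also have "\<dots> = g (n + int k) - (\<Sum>j\<in>{1..<k}. g (n + int j))"
        using False c k by (intro arg_cong2[where f="(-)"] less sum.cong) auto
      also have "\<dots> = g n" by (rule e[OF g, symmetric])
      finally show ?thesis .
    qed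
  qed
qed

lemma lucas_rec: "k > 0 \<Longrightarrow> lucas k (n + int k) = (\<Sum>j<k. lucas k (n + int j))"
proof -
  assume k: "k > 0"
  let ?P = "\<lambda>f. (\<forall>n::int. f (n + int k) = (\<Sum>j<k. f (n + int j)))
                   \<and> (\<forall>r<k. f (int r) = mat_trace (Qmat k ^\<^sub>m r))"
  have "?P (ext k (\<lambda>r. mat_trace (Qmat k ^\<^sub>m r)))"
  proof (intro conjI allI impI)
    fix n show "ext k (\<lambda>r. mat_trace (Qmat k ^\<^sub>m r)) (n + int k) = (\<Sum>j<k. ext k (\<lambda>r. mat_trace (Qmat k ^\<^sub>m r)) (n + int j))"
      by (rule ext_rec[OF k])
  next
    fix r assume "r < k" then show "ext k (\<lambda>r. mat_trace (Qmat k ^\<^sub>m r)) (int r) = mat_trace (Qmat k ^\<^sub>m r)"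
      by (rule ext_init[OF k])
  qed
  moreover have "f = g" if "?P f" "?P g" for f g
  proof
    fix x show "f x = g x" by (rule uniq[OF k]) (use that in auto)
  qed
  ultimately have "\<exists>!f. ?P f" by blast
  from theI'[OF this] show ?thesis unfolding lucas_def by blast
qed


definition Wm :: "(int \<Rightarrow> int) \<Rightarrow> nat \<Rightarrow> int \<Rightarrow> int mat" where
  "Wm f k n = mat k k (\<lambda>(i,t). f (n - 1 - int i + int t))"

definition Um :: "nat \<Rightarrow> int mat" where
  "Um k = mat k k (\<lambda>(t,j). if j \<le> t then 1 else 0)"

lemma sum_int_shift:
  fixes a :: int and g :: "int \<Rightarrow> int"
  shows "(\<Sum>m\<in>{a + int p .. a + int q}. g m) = (\<Sum>t\<in>{p..q}. g (a + int t))"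
proof -
  have "{a + int p .. a + int q} = (\<lambda>t. a + int t) ` {p..q}"
  proof
    show "{a + int p .. a + int q} \<subseteq> (\<lambda>t. a + int t) ` {p..q}"
    proof
      fix m assume "m \<in> {a + int p .. a + int q}"
      then show "m \<in> (\<lambda>t. a + int t) ` {p..q}"
        by (intro image_eqI[where x="nat (m - a)"]) auto
    qed
  qed auto
  moreover have "inj_on (\<lambda>t. a + int t) {p..q}" by (auto simp: inj_on_def)
  ultimately show ?thesis by (simp add: sum.reindex)
qed

lemma det_Um: "det (Um k) = 1"
proof -
  have "det (Um k) = prod_list (diag_mat (Um k))"
    by (rule det_lower_triangular[of k]) (auto simp: Um_def)
  also have "diag_mat (Um k) = replicate k 1"
    by (rule nth_equalityI) (auto simp: diag_mat_def Um_def)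
  finally show ?thesis by simp
qed

lemma det_Q: assumes k: "k > 0" shows "det (Qmat k) = (-1) ^ (k + 1)"
proof -
  have Q: "Qmat k \<in> carrier_mat k k" by (simp add: Qmat_def)
  have "det (Qmat k) = (\<Sum>i<k. Qmat k $$ (i,k-1) * cofactor (Qmat k) i (k-1))"
    by (rule laplace_expansion_column[OF Q]) (use k in auto)
  also have "\<dots> = (\<Sum>i<k. if i = 0 then cofactor (Qmat k) 0 (k-1) else 0)"
    by (rule sum.cong[OF refl]) (use k in \<open>auto simp: Qmat_def\<close>)
  also have "\<dots> = cofactor (Qmat k) 0 (k-1)" using k by simp
  also have "mat_delete (Qmat k) 0 (k-1) = 1\<^sub>m (k-1)"
    by (rule eq_matI) (auto simp: mat_delete_def Qmat_def)
  then have "cofactor (Qmat k) 0 (k-1) = (-1)^(k-1)" by (simp add: cofactor_def)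
  also have "(-1::int)^(k-1) = (-1)^(k+1)"
  proof -
    have "k + 1 = (k - 1) + 2" using k by simp
    then show ?thesis by (metis power_add neg_one_even_power even_numeral mult_1_right)
  qed
  finally show ?thesis .
qed

lemma LW: assumes k: "k > 0" shows "lucas_mat k n = Wm (lucas k) k n * Um k"
proof (rule eq_matI)
  fix i j assume i: "i < dim_row (Wm (lucas k) k n * Um k)" and j: "j < dim_col (Wm (lucas k) k n * Um k)"
  then have i: "i < k" and j: "j < k" by (auto simp: Wm_def Um_def)
  have r: "(Wm (lucas k) k n * Um k) $$ (i,j) = (\<Sum>t<k. if j \<le> t then lucas k (n - 1 - int i + int t) else 0)"
    using i j by (auto simp add: Wm_def Um_def scalar_prod_def lessThan_atLeast0 intro!: sum.cong)
  show "lucas_mat k n $$ (i, j) = (Wm (lucas k) k n * Um k) $$ (i, j)"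
  proof (cases "j = 0")
    case True
    have "lucas k (int k + n - (int i + 1)) = lucas k ((n - 1 - int i) + int k)" by (simp add: algebra_simps)
    also have "\<dots> = (\<Sum>t<k. lucas k (n - 1 - int i + int t))" by (rule lucas_rec[OF k])
    finally show ?thesis using i j True r by (simp add: lucas_mat_def)
  next
    case False
    have "lucas_mat k n $$ (i, j) = (\<Sum>m\<in>{(n - 1 - int i) + int j .. (n - 1 - int i) + int (k - 1)}. lucas k m)"
      using i j False k by (simp add: lucas_mat_def algebra_simps of_nat_diff)
    also have "\<dots> = (\<Sum>t\<in>{j..k-1}. lucas k (n - 1 - int i + int t))" by (rule sum_int_shift)
    also have "\<dots> = (\<Sum>t<k. if j \<le> t then lucas k (n - 1 - int i + int t) else 0)"
    proof -
      have "{..<k} \<inter> {t. j \<le> t} = {j..k-1}" using k by auto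
      then show ?thesis by (simp add: sum.If_cases)
    qed
    finally show ?thesis using r by simp
  qed
qed (auto simp: lucas_mat_def Wm_def Um_def)

lemma QW: assumes k: "k > 0" shows "Wm (lucas k) k (n + 1) = Qmat k * Wm (lucas k) k n"
proof (rule eq_matI)
  fix i t assume i: "i < dim_row (Qmat k * Wm (lucas k) k n)" and t: "t < dim_col (Qmat k * Wm (lucas k) k n)"
  then have i: "i < k" and t: "t < k" by (auto simp: Wm_def Qmat_def)
  have r: "(Qmat k * Wm (lucas k) k n) $$ (i,t) = (\<Sum>s<k. (if i = 0 then 1 else if i = s + 1 then 1 else 0) * lucas k (n - 1 - int s + int t))"
    using i t by (simp add: Wm_def Qmat_def scalar_prod_def lessThan_atLeast0)
  show "Wm (lucas k) k (n + 1) $$ (i, t) = (Qmat k * Wm (lucas k) k n) $$ (i, t)"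
  proof (cases "i = 0")
    case True
    have "lucas k (n + int t) = lucas k ((n + int t - int k) + int k)" by simp
    also have "\<dots> = (\<Sum>j<k. lucas k (n + int t - int k + int j))" by (rule lucas_rec[OF k])
    also have "\<dots> = (\<Sum>s<k. lucas k (n - 1 - int s + int t))"
      by (rule sum.reindex_bij_witness[where i="\<lambda>s. k - 1 - s" and j="\<lambda>s. k - 1 - s"]) (auto simp: of_nat_diff algebra_simps)
    finally show ?thesis using r True i t by (simp add: Wm_def)
  next
    case False
    have "(\<Sum>s<k. (if i = 0 then 1 else if i = s + 1 then 1 else 0) * lucas k (n - 1 - int s + int t))
       = (\<Sum>s<k. if s = i - 1 then lucas k (n - 1 - int s + int t) else 0)"
      by (rule sum.cong[OF refl]) (use False in auto)
    also have "\<dots> = lucas k (n - 1 - int (i - 1) + int t)" using i by simp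
    finally show ?thesis using r False i t by (simp add: Wm_def of_nat_diff algebra_simps)
  qed
qed (auto simp: Wm_def Qmat_def)

theorem theorem4:
  fixes k :: nat and n :: int
  assumes "k \<ge> 2"
  shows "(odd k \<longrightarrow> det (lucas_mat k n) = det (lucas_mat k 0)) \<and>
         (even k \<longrightarrow> det (lucas_mat k n) = (-1) ^ nat \<bar>n\<bar> * det (lucas_mat k 0))"
proof -
  have k: "k > 0" using assms by simp
  define c :: int where "c = (-1) ^ (k + 1)"
  define D where "D n = det (Wm (lucas k) k n)" for n
  have c2: "c * c = 1" by (simp add: c_def flip: power_add)
  have step: "D (n + 1) = c * D n" for n
    unfolding D_def QW[OF k] c_def det_Q[OF k, symmetric]
    by (rule det_mult) (auto simp: Qmat_def Wm_def)
  have L: "det (lucas_mat k n) = D n" for n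
    unfolding LW[OF k] D_def using det_Um[of k]
    by (subst det_mult[of _ k]) (auto simp: Wm_def Um_def)
  have pos: "D (int m) = c ^ m * D 0" for m
  proof (induction m)
    case (Suc m)
    have "D (int (Suc m)) = D (int m + 1)" by (simp add: add.commute)
    also have "\<dots> = c * D (int m)" by (rule step)
    finally show ?case using Suc by simp
  qed simp
  have neg0: "D 0 = c ^ m * D (- int m)" for m
  proof (induction m)
    case (Suc m)
    have "D (- int m) = c * D (- int (Suc m))" using step[of "- int (Suc m)"] by simp
    then show ?case using Suc by simp
  qed simp
  have neg: "D (- int m) = c ^ m * D 0" for m
  proof -
    have "c ^ m * D 0 = (c * c) ^ m * D (- int m)" using neg0[of m] by (simp add: power_mult_distrib)
    then show ?thesis using c2 by simp
  qed
  have main: "D n = c ^ nat \<bar>n\<bar> * D 0"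
  proof (cases "n \<ge> 0")
    case True then show ?thesis using pos[of "nat n"] by simp
  next
    case False then show ?thesis using neg[of "nat (-n)"] by simp
  qed
  show ?thesis unfolding L main c_def by auto
qed

end
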